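(* As formal power series in $q$, $$\sum_{n=0}^\infty \overline{bt}(2n)q^n=8q\frac{f_2^7f_4^3f_8^2}{f_1^{18}}+\frac{f_2^{17}f_4}{f_1^{22}f_8^2}.$$
   Context: For a positive integer $k$ let $f_k:=\prod_{m=1}^\infty(1-q^{mk})$. The function $\overline{bt}(n)$ is defined by $\sum_{n\ge0}\overline{bt}(n)q^n=\frac{f_4^3}{f_1^6f_2^3}$. *)

theory Defs
  imports "HOL-Computational_Algebra.Formal_Power_Series"
begin

text \<open>f_k = prod_{m>=1} (1 - q^(m k)) as a formal power series over the rationals.
  For k >= 1 the n-th coefficient of the infinite product equals the n-th coefficient
  of the finite product over m = 1..n (factors with m > n are 1 modulo q^(n+1)).\<close>
definition fk :: "nat \<Rightarrow> rat fps" where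
  "fk k = Abs_fps (\<lambda>n. fps_nth (\<Prod>m\<in>{1..n}. (1 - fps_X ^ (m * k))) n)"

definition btbar_gf :: "rat fps" where
  "btbar_gf = fk 4 ^ 3 / (fk 1 ^ 6 * fk 2 ^ 3)"

definition btbar :: "nat \<Rightarrow> rat" where
  "btbar n = fps_nth btbar_gf n"

end

theory Submission
  imports Defs
begin

unbundle fps_syntax

definition eqN :: "nat \<Rightarrow> 'a::comm_ring_1 fps \<Rightarrow> 'a fps \<Rightarrow> bool" where
  "eqN N a b \<longleftrightarrow> (\<forall>k<N. a $ k = b $ k)"

lemma eqN_refl[simp]: "eqN N a a" by (simp add: eqN_def)
lemma eqN_sym: "eqN N a b \<Longrightarrow> eqN N b a" by (simp add: eqN_def)
lemma eqN_trans: "eqN N a b \<Longrightarrow> eqN N b c \<Longrightarrow> eqN N a c" by (simp add: eqN_def)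
lemma eqN_mono: "eqN N a b \<Longrightarrow> M \<le> N \<Longrightarrow> eqN M a b" by (simp add: eqN_def)
lemma eqN_add: "eqN N a b \<Longrightarrow> eqN N c d \<Longrightarrow> eqN N (a+c) (b+d)" by (simp add: eqN_def)
lemma eqN_diff: "eqN N a b \<Longrightarrow> eqN N c d \<Longrightarrow> eqN N (a-c) (b-d)" by (simp add: eqN_def)
lemma eqN_mult: "eqN N a b \<Longrightarrow> eqN N c d \<Longrightarrow> eqN N (a*c) (b*d)"
  unfolding eqN_def fps_mult_nth
proof (intro allI impI)
  fix k assume "\<forall>k<N. a $ k = b $ k" "\<forall>k<N. c $ k = d $ k" "k < N"
  then show "(\<Sum>i = 0..k. a $ i * c $ (k - i)) = (\<Sum>i = 0..k. b $ i * d $ (k - i))"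
    by (intro sum.cong) auto
qed
lemma eqN_all: "(\<And>N. eqN N a b) \<Longrightarrow> a = b"
  unfolding eqN_def by (rule fps_ext) blast
lemma eqN_Xpow: "eqN N a b \<Longrightarrow> eqN (N+e) (fps_X^e * a) (fps_X^e * b)"
  unfolding eqN_def fps_X_power_mult_nth by auto
lemma eqN_add_high: "e \<ge> N \<Longrightarrow> eqN N a (a + b * fps_X^e)"
  unfolding eqN_def by (simp add: fps_X_power_mult_right_nth)
lemma eqN_cancel:
  fixes u a b :: "'a::field fps"
  assumes "u $ 0 \<noteq> 0" "eqN N (u*a) (u*b)" shows "eqN N a b"
proof -
  have "eqN N (inverse u * (u*a)) (inverse u * (u*b))" using assms(2) eqN_mult eqN_refl by blast
  moreover have "inverse u * u = 1" using assms(1) by (simp add: inverse_mult_eq_1)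
  ultimately show ?thesis by (simp add: mult.assoc[symmetric])
qed

definition LimP :: "(nat \<Rightarrow> 'a::comm_ring_1 fps) \<Rightarrow> 'a fps" where
  "LimP P = Abs_fps (\<lambda>n. P n $ n)"

lemma Lim_eqN:
  assumes "\<And>M. eqN (Suc M) (P M) (P (Suc M))"
  shows "eqN (Suc M) (LimP P) (P M)"
proof -
  have "\<forall>k\<le>M. P M $ k = P k $ k"
  proof (induction M)
    case 0 then show ?case by simp
  next
    case (Suc M)
    show ?case
    proof (intro allI impI)
      fix k assume k: "k \<le> Suc M"
      show "P (Suc M) $ k = P k $ k"
      proof (cases "k = Suc M")
        case False
        then have "k \<le> M" using k by simp
        then have "P (Suc M) $ k = P M $ k" using assms[of M] unfolding eqN_def by simp
        then show ?thesis using Suc \<open>k \<le> M\<close> by simp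
      qed simp
    qed
  qed
  then show ?thesis unfolding eqN_def LimP_def by simp
qed

lemma prod_step_eqN:
  fixes c :: "nat \<Rightarrow> 'a::comm_ring_1" and e :: "nat \<Rightarrow> nat"
  assumes "\<And>m. e m \<ge> m"
  shows "eqN (Suc M) (\<Prod>m\<in>{1..M}. (1 + fps_const (c m) * fps_X^(e m)))
                     (\<Prod>m\<in>{1..Suc M}. (1 + fps_const (c m) * fps_X^(e m)))"
proof -
  have "(\<Prod>m\<in>{1..Suc M}. (1 + fps_const (c m) * fps_X^(e m))) =
        (\<Prod>m\<in>{1..M}. (1 + fps_const (c m) * fps_X^(e m))) * (1 + fps_const (c (Suc M)) * fps_X^(e (Suc M)))"
    by (simp add: prod.nat_ivl_Suc')
  also have "\<dots> = (\<Prod>m\<in>{1..M}. (1 + fps_const (c m) * fps_X^(e m))) + ((\<Prod>m\<in>{1..M}. (1 + fps_const (c m) * fps_X^(e m))) * fps_const (c (Suc M))) * fps_X^(e (Suc M))"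
    by (simp add: algebra_simps)
  finally have eq: "(\<Prod>m\<in>{1..Suc M}. (1 + fps_const (c m) * fps_X^(e m))) = (\<Prod>m\<in>{1..M}. (1 + fps_const (c m) * fps_X^(e m))) + ((\<Prod>m\<in>{1..M}. (1 + fps_const (c m) * fps_X^(e m))) * fps_const (c (Suc M))) * fps_X^(e (Suc M))" .
  show ?thesis unfolding eq by (rule eqN_add_high[OF assms[of "Suc M"]])
qed


definition dil :: "nat \<Rightarrow> rat fps \<Rightarrow> rat fps" where "dil d a = a oo fps_X^d"
definition neg :: "rat fps \<Rightarrow> rat fps" where "neg a = a oo (- fps_X)"

lemma negX_pow_nth: "((- fps_X :: rat fps)^i) $ n = (if n = i then (-1)^i else 0)"
proof (induction i arbitrary: n)
  case (Suc i)
  have "((- fps_X :: rat fps)^Suc i) $ n = - ((fps_X * (- fps_X)^i) $ n)" by simp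
  also have "\<dots> = (if n = Suc i then (-1)^(Suc i) else 0)"
    using Suc by (cases n) auto
  finally show ?case .
qed simp

lemma neg_nth: "neg a $ n = (-1)^n * a $ n"
proof -
  have "neg a $ n = (\<Sum>i=0..n. a$i * (if n = i then (-1)^i else 0))"
    unfolding neg_def fps_compose_nth negX_pow_nth ..
  also have "\<dots> = (\<Sum>i\<in>{0..n}. if i = n then a$i * (-1)^i else 0)"
    by (intro sum.cong) auto
  also have "\<dots> = (-1)^n * a $ n" by simp
  finally show ?thesis .
qed

lemma dil_nth: assumes "0 < d" shows "dil d a $ n = (if d dvd n then a $ (n div d) else 0)"
proof -
  have "dil d a $ n = (\<Sum>i=0..n. a$i * (if n = d*i then 1 else 0))"
    unfolding dil_def fps_compose_nth power_mult[symmetric] by simp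
  also have "\<dots> = (\<Sum>i\<in>{0..n}. if i = n div d \<and> d dvd n then a$i else 0)"
    using assms by (intro sum.cong) auto
  also have "\<dots> = (if d dvd n then a $ (n div d) else 0)"
    using assms by (cases "d dvd n") (auto simp: sum.delta' div_le_dividend)
  finally show ?thesis .
qed

lemma dil_mult: "0 < d \<Longrightarrow> dil d (a*b) = dil d a * dil d b"
  unfolding dil_def by (rule fps_compose_mult_distrib) simp
lemma dil_add: "dil d (a+b) = dil d a + dil d b"
  unfolding dil_def by (rule fps_compose_add_distrib)
lemma dil_diff: "dil d (a-b) = dil d a - dil d b"
  unfolding dil_def by (rule fps_compose_sub_distrib)
lemma dil_1[simp]: "dil d 1 = 1" unfolding dil_def by simp
lemma dil_X: "0 < d \<Longrightarrow> dil d fps_X = fps_X^d" unfolding dil_def by simp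
lemma dil_power: "0 < d \<Longrightarrow> dil d (a^k) = (dil d a)^k"
  by (induction k) (simp_all add: dil_mult)
lemma dil_prod: "0 < d \<Longrightarrow> dil d (\<Prod>i\<in>S. f i) = (\<Prod>i\<in>S. dil d (f i))"
  by (induction S rule: infinite_finite_induct) (simp_all add: dil_mult)
lemma dil_const: "0 < d \<Longrightarrow> dil d (fps_const c) = fps_const c"
  by (rule fps_ext) (auto simp: dil_nth elim!: dvdE)
lemma dil_numeral: "0 < d \<Longrightarrow> dil d (numeral k) = numeral k"
  by (simp add: numeral_fps_const dil_const)
lemma dil_dil: "0 < a \<Longrightarrow> 0 < b \<Longrightarrow> dil a (dil b x) = dil (a*b) x"
proof (rule fps_ext)
  fix n assume "0 < a" "0 < b"
  show "dil a (dil b x) $ n = dil (a * b) x $ n"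
  proof (cases "a*b dvd n")
    case True
    then obtain m where "n = a*b*m" by blast
    then show ?thesis using \<open>0<a\<close> \<open>0<b\<close> by (simp add: dil_nth mult.assoc)
  next
    case False
    then show ?thesis using \<open>0<a\<close> \<open>0<b\<close>
      by (auto simp add: dil_nth elim!: dvdE)
  qed
qed
lemma dil_inj: "0 < d \<Longrightarrow> dil d a = dil d b \<Longrightarrow> a = b"
proof (rule fps_ext)
  fix n assume "0 < d" "dil d a = dil d b"
  then have "dil d a $ (d*n) = dil d b $ (d*n)" by simp
  then show "a $ n = b $ n" using \<open>0<d\<close> by (simp add: dil_nth)
qed
lemma eqN_dil: "0 < d \<Longrightarrow> eqN N a b \<Longrightarrow> eqN (d*N) (dil d a) (dil d b)"
  unfolding eqN_def
proof (intro allI impI)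
  fix k assume "0 < d" "\<forall>k<N. a $ k = b $ k" "k < d*N"
  moreover have "d dvd k \<Longrightarrow> k div d < N" using \<open>k<d*N\<close> \<open>0<d\<close>
    by (metis div_less_iff_less_mult mult.commute)
  ultimately show "dil d a $ k = dil d b $ k" by (simp add: dil_nth)
qed

lemma neg_mult: "neg (a*b) = neg a * neg b"
  unfolding neg_def by (rule fps_compose_mult_distrib) simp
lemma neg_add: "neg (a+b) = neg a + neg b"
  unfolding neg_def by (rule fps_compose_add_distrib)
lemma neg_diff: "neg (a-b) = neg a - neg b"
  unfolding neg_def by (rule fps_compose_sub_distrib)
lemma neg_1[simp]: "neg 1 = 1" unfolding neg_def by simp
lemma neg_X: "neg fps_X = - fps_X" unfolding neg_def by simp
lemma neg_power: "neg (a^k) = (neg a)^k"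
  by (induction k) (simp_all add: neg_mult)
lemma neg_prod: "neg (\<Prod>i\<in>S. f i) = (\<Prod>i\<in>S. neg (f i))"
  by (induction S rule: infinite_finite_induct) (simp_all add: neg_mult)
lemma neg_dil: "even d \<Longrightarrow> 0 < d \<Longrightarrow> neg (dil d a) = dil d a"
  by (rule fps_ext) (auto simp: neg_nth dil_nth dest: dvd_trans)
lemma neg_numeral: "neg (numeral k) = numeral k"
  by (rule fps_ext) (simp add: neg_nth numeral_fps_const)
lemma eqN_neg: "eqN N a b \<Longrightarrow> eqN N (neg a) (neg b)"
  unfolding eqN_def by (simp add: neg_nth)

definition ev :: "rat fps \<Rightarrow> rat fps" where "ev a = Abs_fps (\<lambda>n. a $ (2*n))"
definition od :: "rat fps \<Rightarrow> rat fps" where "od a = Abs_fps (\<lambda>n. a $ (2*n+1))"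

lemma ev_od_split: "b = dil 2 (ev b) + fps_X * dil 2 (od b)"
proof (rule fps_ext)
  fix n show "b $ n = (dil 2 (ev b) + fps_X * dil 2 (od b)) $ n"
  proof (cases n)
    case 0 then show ?thesis by (simp add: dil_nth ev_def)
  next
    case (Suc m)
    then show ?thesis by (cases "even m") (auto simp: dil_nth ev_def od_def elim!: evenE oddE)
  qed
qed

lemma ev_split: "ev (dil 2 c + fps_X * dil 2 c') = c"
proof (rule fps_ext)
  fix n show "ev (dil 2 c + fps_X * dil 2 c') $ n = c $ n"
    by (cases n) (simp_all add: ev_def dil_nth)
qed

lemma ev_dil_mult: "ev (dil 2 a * b) = a * ev b"
proof -
  have "dil 2 a * b = dil 2 (a * ev b) + fps_X * dil 2 (a * od b)"
    by (subst ev_od_split[of b]) (simp add: dil_mult algebra_simps)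
  then show ?thesis by (simp add: ev_split)
qed


fun qbin :: "'a::comm_ring_1 \<Rightarrow> nat \<Rightarrow> nat \<Rightarrow> 'a" where
  "qbin p n 0 = 1"
| "qbin p 0 (Suc k) = 0"
| "qbin p (Suc n) (Suc k) = qbin p n k + p^(Suc k) * qbin p n (Suc k)"

lemma qbin_gt: "n < k \<Longrightarrow> qbin p n k = 0"
proof (induction n arbitrary: k)
  case 0 then show ?case by (cases k) auto
next
  case (Suc n) then show ?case by (cases k) auto
qed

definition Tz :: "int \<Rightarrow> nat" where "Tz x = nat (x*(x+1) div 2)"

lemma Tz_int: "int (Tz x) * 2 = x*(x+1)"
proof -
  have "even (x*(x+1))" by simp
  moreover have "x*(x+1) \<ge> 0"
    by (cases "x \<ge> 0") (simp_all add: mult_nonpos_nonpos mult_le_0_iff)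
  ultimately show ?thesis unfolding Tz_def by (auto elim!: evenE)
qed

lemma Tz_succ: "int (Tz (x+1)) = int (Tz x) + (x+1)"
proof -
  have "int (Tz (x+1)) * 2 = int (Tz x) * 2 + 2*(x+1)"
    unfolding Tz_int by (simp add: algebra_simps)
  then show ?thesis by presburger
qed

lemma C0: "(\<Prod>k\<in>{1..b}. (1 + z*p^k)) = (\<Sum>i\<le>b. qbin p b i * z^i * p^(Tz (int i)))"
proof (induction b arbitrary: z)
  case 0 then show ?case by (simp add: Tz_def)
next
  case (Suc b)
  have TS: "Tz (int (Suc i)) = Tz (int i) + Suc i" for i
  proof -
    have "int (Tz (int (Suc i))) = int (Tz (int i) + Suc i)" using Tz_succ[of "int i"] by (simp add: add_ac)
    then show ?thesis by (simp only: of_nat_eq_iff)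
  qed
  have TS': "Tz (1 + int i) = Tz (int i) + Suc i" for i using TS[of i] by simp
  have "(\<Prod>k\<in>{1..Suc b}. (1 + z*p^k)) = (1 + z*p) * (\<Prod>k\<in>{Suc 1..Suc b}. (1 + z*p^k))"
    by (simp add: prod.atLeast_Suc_atMost)
  also have "(\<Prod>k\<in>{Suc 1..Suc b}. (1 + z*p^k)) = (\<Prod>k\<in>{1..b}. (1 + (z*p)*p^k))"
    by (subst prod.shift_bounds_cl_Suc_ivl) (simp add: algebra_simps)
  also have "\<dots> = (\<Sum>i\<le>b. qbin p b i * (z*p)^i * p^(Tz (int i)))" by (rule Suc.IH)
  also have "(1 + z*p) * (\<Sum>i\<le>b. qbin p b i * (z*p)^i * p^(Tz (int i))) =
      (\<Sum>i\<le>b. qbin p b i * (z*p)^i * p^(Tz (int i))) + z*p*(\<Sum>i\<le>b. qbin p b i * (z*p)^i * p^(Tz (int i)))"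
    by (simp add: algebra_simps)
  also have "(\<Sum>i\<le>b. qbin p b i * (z*p)^i * p^(Tz (int i))) = (\<Sum>i\<le>b. qbin p b i * z^i * p^(i + Tz (int i)))"
    by (rule sum.cong) (simp_all add: power_mult_distrib power_add mult_ac)
  also have "z*p*(\<Sum>i\<le>b. qbin p b i * z^i * p^(i + Tz (int i))) = (\<Sum>i\<le>b. qbin p b i * z^(Suc i) * p^(Tz (int (Suc i))))"
    unfolding sum_distrib_left by (rule sum.cong) (simp_all add: TS' power_add mult_ac)
  finally have L: "(\<Prod>k\<in>{1..Suc b}. (1 + z*p^k)) =
     (\<Sum>i\<le>b. qbin p b i * z^i * p^(i + Tz (int i))) + (\<Sum>i\<le>b. qbin p b i * z^(Suc i) * p^(Tz (int (Suc i))))" .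
  define h where "h i = qbin p b i * z^i * p^(i + Tz (int i))" for i
  have "(\<Sum>i\<le>b. h i) = (\<Sum>i\<le>Suc b. h i)" by (simp add: h_def qbin_gt)
  also have "\<dots> = h 0 + (\<Sum>i\<le>b. h (Suc i))" by (rule sum.atMost_Suc_shift)
  also have "h 0 = 1" by (simp add: h_def Tz_def)
  finally have H: "(\<Sum>i\<le>b. h i) = 1 + (\<Sum>i\<le>b. p^(Suc i) * qbin p b (Suc i) * z^(Suc i) * p^(Tz (int (Suc i))))"
    by (simp add: h_def TS TS' power_add algebra_simps)
  have "(\<Sum>i\<le>Suc b. qbin p (Suc b) i * z^i * p^(Tz (int i))) =
      1 + (\<Sum>i\<le>b. (qbin p b i + p^(Suc i) * qbin p b (Suc i)) * z^(Suc i) * p^(Tz (int (Suc i))))"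
    by (subst sum.atMost_Suc_shift) (simp add: Tz_def del: of_nat_Suc)
  also have "\<dots> = (\<Sum>i\<le>b. h i) + (\<Sum>i\<le>b. qbin p b i * z^(Suc i) * p^(Tz (int (Suc i))))"
    unfolding H by (simp add: algebra_simps sum.distrib)
  finally show ?case using L unfolding h_def by simp
qed

lemma Tz_shift: "a + Tz (x + 1) = nat (x+1+int a) + Tz x" if "x + 1 + int a \<ge> 0" for a :: nat and x :: int
proof -
  have "int (a + Tz (x + 1)) = int (nat (x+1+int a) + Tz x)" using Tz_succ[of x] that by simp
  then show ?thesis by (simp only: of_nat_eq_iff)
qed

lemma CJ: "(\<Prod>s<a. (z + p^s)) * (\<Prod>k\<in>{1..b}. (1 + z*p^k)) =
   (\<Sum>i\<le>a+b. qbin p (a+b) i * z^i * p^(Tz (int i - int a)))"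
proof (induction a)
  case 0 then show ?case using C0[where b=b and z=z and p=p] by simp
next
  case (Suc a)
  define m where "m = a + b"
  define S where "S = (\<Sum>i\<le>m. qbin p m i * z^i * p^(Tz (int i - int a)))"
  have "(\<Prod>s<Suc a. (z + p^s)) * (\<Prod>k\<in>{1..b}. (1 + z*p^k)) = (z + p^a) * S"
    using Suc.IH by (simp add: S_def m_def mult_ac)
  also have "\<dots> = (\<Sum>i\<le>m. qbin p m i * z^(Suc i) * p^(Tz (int i - int a))) +
                    (\<Sum>i\<le>m. qbin p m i * z^i * p^(a + Tz (int i - int a)))"
    by (simp add: S_def algebra_simps sum_distrib_left power_add sum.distrib)
  finally have L: "(\<Prod>s<Suc a. (z + p^s)) * (\<Prod>k\<in>{1..b}. (1 + z*p^k)) =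
      (\<Sum>i\<le>m. qbin p m i * z^(Suc i) * p^(Tz (int i - int a))) +
      (\<Sum>i\<le>m. qbin p m i * z^i * p^(a + Tz (int i - int a)))" .
  define h where "h i = qbin p m i * z^i * p^(a + Tz (int i - int a))" for i
  have hS: "h (Suc i) = p^(Suc i) * qbin p m (Suc i) * z^(Suc i) * p^(Tz (int i - int a))" for i
  proof -
    have "a + Tz (int i - int a + 1) = nat (int i - int a + 1 + int a) + Tz (int i - int a)"
      by (rule Tz_shift) simp
    moreover have "int (Suc i) - int a = int i - int a + 1" by simp
    moreover have "nat (int i - int a + 1 + int a) = Suc i" by simp
    ultimately have "a + Tz (int (Suc i) - int a) = Suc i + Tz (int i - int a)" by metis
    then show ?thesis by (simp add: h_def power_add mult_ac)
  qed
  have h0: "h 0 = p^(Tz (- int (Suc a)))"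
  proof -
    have "a + Tz (- int a - 1 + 1) = nat (- int a - 1 + 1 + int a) + Tz (- int a - 1)"
      by (rule Tz_shift) simp
    moreover have "- int a - 1 = - int (Suc a)" by simp
    ultimately have "a + Tz (- int a) = Tz (- int (Suc a))" by simp
    then show ?thesis by (simp add: h_def)
  qed
  have "(\<Sum>i\<le>m. h i) = (\<Sum>i\<le>Suc m. h i)" by (simp add: h_def qbin_gt)
  also have "\<dots> = h 0 + (\<Sum>i\<le>m. h (Suc i))" by (rule sum.atMost_Suc_shift)
  finally have H: "(\<Sum>i\<le>m. h i) = p^(Tz (- int (Suc a))) +
      (\<Sum>i\<le>m. p^(Suc i) * qbin p m (Suc i) * z^(Suc i) * p^(Tz (int i - int a)))"
    by (simp add: h0 hS)
  have "(\<Sum>i\<le>Suc m. qbin p (Suc m) i * z^i * p^(Tz (int i - int (Suc a)))) =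
      p^(Tz (- int (Suc a))) + (\<Sum>i\<le>m. (qbin p m i + p^(Suc i) * qbin p m (Suc i)) * z^(Suc i) * p^(Tz (int i - int a)))"
    by (subst sum.atMost_Suc_shift) simp
  also have "\<dots> = (\<Sum>i\<le>m. h i) + (\<Sum>i\<le>m. qbin p m i * z^(Suc i) * p^(Tz (int i - int a)))"
    unfolding H by (simp add: algebra_simps sum.distrib)
  finally show ?case using L unfolding h_def m_def by simp
qed

definition pp :: "'a::comm_ring_1 \<Rightarrow> nat \<Rightarrow> 'a" where "pp p n = (\<Prod>k\<in>{1..n}. (1 - p^k))"

lemma pp_Suc: "pp p (Suc n) = pp p n * (1 - p^(Suc n))"
  by (simp add: pp_def prod.nat_ivl_Suc')

lemma qbin_prod: "k \<le> n \<Longrightarrow> qbin p n k * pp p k * pp p (n-k) = pp p n"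
proof (induction n arbitrary: k)
  case 0 then show ?case by (simp add: pp_def)
next
  case (Suc n)
  show ?case
  proof (cases k)
    case 0 then show ?thesis by (simp add: pp_def)
  next
    case (Suc j)
    have j: "j \<le> n" using Suc.prems Suc by simp
    have "qbin p n j * pp p (Suc j) * pp p (n - j) = (qbin p n j * pp p j * pp p (n - j)) * (1 - p^(Suc j))"
      by (simp add: pp_Suc mult_ac)
    then have A: "qbin p n j * pp p (Suc j) * pp p (n - j) = pp p n * (1 - p^(Suc j))"
      using Suc.IH[OF j] by simp
    have B: "p^(Suc j) * qbin p n (Suc j) * pp p (Suc j) * pp p (n - j) = p^(Suc j) * (1 - p^(n-j)) * pp p n"
    proof (cases "Suc j \<le> n")
      case True
      then have "n - j = Suc (n - Suc j)" by simp
      then have "pp p (n - j) = pp p (n - Suc j) * (1 - p^(n-j))" by (simp add: pp_Suc)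
      then have "p^(Suc j) * qbin p n (Suc j) * pp p (Suc j) * pp p (n - j) =
         p^(Suc j) * (1 - p^(n-j)) * (qbin p n (Suc j) * pp p (Suc j) * pp p (n - Suc j))"
        by (simp add: mult_ac)
      then show ?thesis using Suc.IH[OF True] by simp
    next
      case False
      then have "j = n" using j by simp
      then show ?thesis by (simp add: qbin_gt)
    qed
    have "qbin p (Suc n) k * pp p k * pp p (Suc n - k) =
        qbin p n j * pp p (Suc j) * pp p (n - j) + p^(Suc j) * qbin p n (Suc j) * pp p (Suc j) * pp p (n - j)"
      using Suc by (simp add: algebra_simps)
    also have "\<dots> = pp p n * (1 - p^(Suc n))"
      unfolding A B using j by (simp add: algebra_simps power_add[symmetric])
    finally show ?thesis by (simp add: pp_Suc)
  qed
qed


definition g :: "nat \<Rightarrow> nat \<Rightarrow> rat fps" where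
  "g k M = (\<Prod>m\<in>{1..M}. (1 - fps_X^(m*k)))"

lemma fk_LimP: "fk k = LimP (g k)"
  unfolding fk_def LimP_def g_def ..

lemma g_alt: "g k M = (\<Prod>m\<in>{1..M}. (1 + fps_const (-1) * fps_X^(m*k)))"
  unfolding g_def by (rule prod.cong) (simp_all add: fps_eq_iff)

lemma fk_eqN: "0 < k \<Longrightarrow> eqN (Suc M) (fk k) (g k M)"
  unfolding fk_LimP g_alt
  by (rule Lim_eqN, rule prod_step_eqN) simp

lemma fk_eqN': "0 < k \<Longrightarrow> N \<le> Suc M \<Longrightarrow> eqN N (fk k) (g k M)"
  using fk_eqN eqN_mono by blast

lemma g_nth0: "0 < k \<Longrightarrow> g k M $ 0 = 1"
  unfolding g_alt by (induction M) (simp_all add: prod.nat_ivl_Suc')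

lemma fk_nth0: "0 < k \<Longrightarrow> fk k $ 0 = 1"
  unfolding fk_LimP LimP_def by (simp add: g_nth0)

lemma pp_g: "pp (fps_X^d) M = g d M"
  unfolding pp_def g_def by (rule prod.cong) (simp_all add: power_mult[symmetric] mult.commute)

lemma qbin_fk_eqN:
  assumes d: "0 < d" and i: "i \<le> n"
  shows "eqN (Suc (min i (n - i))) (fk d * qbin (fps_X^d) n i) 1"
proof -
  define x :: "rat fps" where "x = fps_X^d"
  define a where "a = min i (n - i)"
  define b where "b = max i (n - i)"
  have ab: "pp x i * pp x (n - i) = pp x a * pp x b"
    unfolding a_def b_def by (cases "i \<le> n - i") (simp_all add: min_def max_def mult.commute)
  have Q: "qbin x n i * pp x a * pp x b = pp x n"
  proof -
    have "qbin x n i * (pp x i * pp x (n - i)) = pp x n"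
      using qbin_prod[OF i, of x] by (simp only: mult.assoc)
    then show ?thesis unfolding ab by (simp only: mult.assoc)
  qed
  have "a \<le> b" "a \<le> n" unfolding a_def b_def by auto
  have e1: "eqN (Suc a) (pp x b) (fk d)"
    unfolding x_def pp_g using fk_eqN'[OF d, of "Suc a" b] \<open>a \<le> b\<close> by (simp add: eqN_sym)
  have e2: "eqN (Suc a) (pp x n) (fk d)"
    unfolding x_def pp_g using fk_eqN'[OF d, of "Suc a" n] \<open>a \<le> n\<close> by (simp add: eqN_sym)
  have e3: "eqN (Suc a) (pp x a) (fk d)"
    unfolding x_def pp_g using fk_eqN'[OF d, of "Suc a" a] by (simp add: eqN_sym)
  have "eqN (Suc a) (qbin x n i * pp x a * pp x b) (qbin x n i * pp x a * fk d)"
    using eqN_mult[OF eqN_refl e1] by simp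
  then have "eqN (Suc a) (fk d * (qbin x n i * pp x a)) (fk d * 1)"
    unfolding Q using e2 by (simp add: eqN_def mult_ac)
  moreover have "fk d $ 0 \<noteq> 0" by (simp add: fk_nth0 d)
  ultimately have "eqN (Suc a) (qbin x n i * pp x a) 1"
    using eqN_cancel by blast
  moreover have "eqN (Suc a) (qbin x n i * pp x a) (qbin x n i * fk d)"
    using eqN_mult[OF eqN_refl e3] by simp
  ultimately show ?thesis unfolding a_def x_def by (simp add: eqN_def mult.commute)
qed

lemma GL:
  fixes L :: "nat \<Rightarrow> rat fps" and Linf :: "rat fps" and e :: "int \<Rightarrow> nat" and K :: nat
  assumes d: "0 < d"
  and h1: "\<And>n. eqN n Linf (L n)"
  and h2: "\<And>n. n \<ge> 1 \<Longrightarrow> L n = (\<Sum>i\<le>2*n. qbin (fps_X^d) (2*n) i * fps_X^(e (int i - int n)))"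
  and h3: "\<And>j. \<bar>j\<bar> \<le> int (e j) + int K"
  shows "fk d * Linf = Abs_fps (\<lambda>k. of_nat (card {j. e j = k}))"
proof (rule fps_ext)
  fix N
  define n where "n = 2*N + K + 2"
  have n1: "n \<ge> 1" by (simp add: n_def)
  have "eqN (Suc N) Linf (L n)" using eqN_mono[OF h1[of n], of "Suc N"] n_def by simp
  then have "(fk d * Linf) $ N = (fk d * L n) $ N"
    using eqN_mult[OF eqN_refl] unfolding eqN_def by blast
  also have "\<dots> = (\<Sum>i\<le>2*n. (fk d * qbin (fps_X^d) (2*n) i * fps_X^(e (int i - int n))) $ N)"
    using h2[of n] n1 by (simp add: sum_distrib_left fps_sum_nth mult.assoc)
  also have "\<dots> = (\<Sum>i\<le>2*n. of_bool (e (int i - int n) = N))"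
  proof (rule sum.cong)
    fix i assume "i \<in> {..2*n}"
    then have i: "i \<le> 2*n" by simp
    define j where "j = int i - int n"
    define m where "m = min i (2*n - i)"
    have E: "eqN (Suc m) (fk d * qbin (fps_X^d) (2*n) i) 1"
      unfolding m_def by (rule qbin_fk_eqN[OF d i])
    have "(fk d * qbin (fps_X^d) (2*n) i * fps_X^(e j)) $ N = (fps_X^(e j) * (fk d * qbin (fps_X^d) (2*n) i)) $ N"
      by (simp add: mult_ac)
    also have "\<dots> = of_bool (e j = N)"
    proof (cases "N < e j")
      case True then show ?thesis by (simp add: fps_X_power_mult_nth)
    next
      case False
      have "\<bar>j\<bar> \<le> int (e j) + int K" by (rule h3)
      then have "N - e j < Suc m" using False unfolding m_def n_def j_def
        by (auto simp: min_def abs_if split: if_splits)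
      then have "(fk d * qbin (fps_X^d) (2*n) i) $ (N - e j) = (1::rat fps) $ (N - e j)"
        using E unfolding eqN_def by blast
      then show ?thesis using False by (simp add: fps_X_power_mult_nth)
    qed
    finally show "(fk d * qbin (fps_X^d) (2*n) i * fps_X^(e (int i - int n))) $ N = of_bool (e (int i - int n) = N)"
      unfolding j_def .
  qed simp
  also have "\<dots> = of_nat (card {i\<in>{..2*n}. e (int i - int n) = N})"
    by (simp add: Int_def)
  also have "card {i\<in>{..2*n}. e (int i - int n) = N} = card {j. e j = N}"
  proof -
    have inj: "inj_on (\<lambda>i. int i - int n) {i\<in>{..2*n}. e (int i - int n) = N}"
      by (rule inj_onI) simp
    have "(\<lambda>i. int i - int n) ` {i\<in>{..2*n}. e (int i - int n) = N} = {j. e j = N}"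
    proof (rule set_eqI, rule iffI)
      fix j assume "j \<in> {j. e j = N}"
      then have ej: "e j = N" by simp
      have "\<bar>j\<bar> \<le> int N + int K" using h3[of j] ej by simp
      then have "nat (j + int n) \<le> 2*n" "int (nat (j + int n)) - int n = j" unfolding n_def by auto
      then show "j \<in> (\<lambda>i. int i - int n) ` {i\<in>{..2*n}. e (int i - int n) = N}"
        using ej by (auto intro!: image_eqI[of _ _ "nat (j + int n)"])
    qed auto
    then show ?thesis using card_image[OF inj] by simp
  qed
  finally show "(fk d * Linf) $ N = Abs_fps (\<lambda>k. of_nat (card {j. e j = k})) $ N" by simp
qed


definition Ep :: "nat \<Rightarrow> rat fps" where "Ep M = (\<Prod>m\<in>{1..M}. (1 + fps_X^m))"
definition Op :: "nat \<Rightarrow> rat fps" where "Op M = (\<Prod>m\<in>{1..M}. (1 + fps_X^(2*m-1)))"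
definition Einf :: "rat fps" where "Einf = LimP Ep"
definition Oinf :: "rat fps" where "Oinf = LimP Op"

lemma Ep_alt: "Ep M = (\<Prod>m\<in>{1..M}. (1 + fps_const 1 * fps_X^m))"
  unfolding Ep_def by simp
lemma Op_alt: "Op M = (\<Prod>m\<in>{1..M}. (1 + fps_const 1 * fps_X^(2*m-1)))"
  unfolding Op_def by simp

lemma Einf_eqN: "eqN (Suc M) Einf (Ep M)"
  unfolding Einf_def Ep_alt by (rule Lim_eqN, rule prod_step_eqN) simp
lemma Oinf_eqN: "eqN (Suc M) Oinf (Op M)"
  unfolding Oinf_def Op_alt by (rule Lim_eqN, rule prod_step_eqN) simp

lemma Ep_Suc: "Ep (Suc M) = Ep M * (1 + fps_X^(Suc M))"
  unfolding Ep_def by (simp add: prod.nat_ivl_Suc')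
lemma Op_Suc: "Op (Suc M) = Op M * (1 + fps_X^(Suc (2*M)))"
  unfolding Op_def by (simp add: prod.nat_ivl_Suc')

lemma prod_lt_Suc: "(\<Prod>s<Suc m. (1 + fps_X^s :: rat fps)) = 2 * Ep m"
proof (induction m)
  case 0 then show ?case by (simp add: Ep_def)
next
  case (Suc m)
  have "(\<Prod>s<Suc (Suc m). (1 + fps_X^s :: rat fps)) = (\<Prod>s<Suc m. (1 + fps_X^s :: rat fps)) * (1 + fps_X^(Suc m))"
    by simp
  then show ?case using Suc.IH by (simp add: Ep_Suc mult.assoc)
qed

lemma Tz_bound: "\<bar>j\<bar> \<le> int (Tz j) + 1"
proof -
  have c: "0 \<le> x*(x+1)" for x :: int
    by (cases "x \<ge> 0") (simp_all add: mult_nonpos_nonpos mult_le_0_iff)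
  have T: "int (Tz j) * 2 = j*(j+1)" by (rule Tz_int)
  show ?thesis
  proof (cases "j \<ge> 0")
    case True
    have "0 \<le> (j-1)*(j-1+1)" by (rule c)
    moreover have "(j-1)*(j-1+1) = j*(j+1) - 2*j" by (simp add: algebra_simps)
    ultimately show ?thesis using T True by linarith
  next
    case False
    have "0 \<le> (j+1)*(j+1+1)" by (rule c)
    moreover have "(j+1)*(j+1+1) = j*(j+1) + 2*j + 2" by (simp add: algebra_simps)
    ultimately show ?thesis using T False by linarith
  qed
qed

theorem Psi_prod: "fk 1 * (2 * Einf * Einf) = Abs_fps (\<lambda>k. of_nat (card {j. Tz j = k}))"
proof (rule GL[where L = "\<lambda>n. (\<Prod>s<n. (1 + fps_X^s)) * Ep n" and K = 1])
  fix n :: nat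
  show "eqN n (2 * Einf * Einf) ((\<Prod>s<n. (1 + fps_X^s)) * Ep n)"
  proof (cases n)
    case 0 then show ?thesis by (simp add: eqN_def)
  next
    case (Suc m)
    have "eqN (Suc m) (2 * Einf * Einf) (2 * Ep m * Ep (Suc m))"
      using eqN_mult[OF eqN_mult[OF eqN_refl Einf_eqN[of m]] eqN_mono[OF Einf_eqN[of "Suc m"]]] by simp
    then show ?thesis unfolding Suc prod_lt_Suc by (simp add: mult.assoc)
  qed
next
  fix n :: nat assume "n \<ge> 1"
  show "(\<Prod>s<n. (1 + fps_X^s)) * Ep n = (\<Sum>i\<le>2*n. qbin (fps_X^1) (2*n) i * fps_X^(Tz (int i - int n)))"
    using CJ[where a=n and b=n and z=1 and p="fps_X :: rat fps"] by (simp add: Ep_def mult_2)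
next
  fix j show "\<bar>j\<bar> \<le> int (Tz j) + int 1" using Tz_bound[of j] by simp
qed simp

lemma LP: "(\<Prod>s<Suc m. (fps_X + (fps_X^2)^s)) * (\<Prod>k\<in>{1..Suc m}. (1 + fps_X*(fps_X^2)^k)) =
   fps_X^m * (Op m * Op (m+2))"
proof (induction m)
  case 0
  have "Op 2 = (1 + fps_X) * (1 + fps_X^3)"
    by (simp add: Op_def numeral_2_eq_2 numeral_3_eq_3 prod.nat_ivl_Suc')
  then show ?case by (simp add: Op_def numeral_2_eq_2 numeral_3_eq_3 algebra_simps)
next
  case (Suc m)
  have a: "(\<Prod>s<Suc (Suc m). (fps_X + (fps_X^2)^s)) = (\<Prod>s<Suc m. (fps_X + (fps_X^2)^s)) * (fps_X + (fps_X^2)^(Suc m) :: rat fps)"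
    by simp
  have b: "(\<Prod>k\<in>{1..Suc (Suc m)}. (1 + fps_X*(fps_X^2)^k)) = (\<Prod>k\<in>{1..Suc m}. (1 + fps_X*(fps_X^2)^k)) * (1 + fps_X*(fps_X^2)^(Suc (Suc m)) :: rat fps)"
    by (simp add: prod.nat_ivl_Suc')
  have c: "fps_X + (fps_X^2)^(Suc m) = fps_X * (1 + fps_X^(Suc (2*m)) :: rat fps)"
  proof -
    have "(fps_X^2)^(Suc m) = (fps_X * fps_X^(Suc (2*m)) :: rat fps)"
      by (simp only: power_mult[symmetric] mult_Suc_right power_Suc) (simp add: power2_eq_square)
    then show ?thesis by (simp add: algebra_simps)
  qed
  have "(fps_X^2)^(Suc (Suc m)) = (fps_X^(2*(m+2)) :: rat fps)"
    by (subst power_mult[symmetric]) simp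
  then have d: "1 + fps_X*(fps_X^2)^(Suc (Suc m)) = (1 + fps_X^(Suc (2*(m+2))) :: rat fps)"
    by simp
  have "(\<Prod>s<Suc (Suc m). (fps_X + (fps_X^2)^s)) * (\<Prod>k\<in>{1..Suc (Suc m)}. (1 + fps_X*(fps_X^2)^k)) =
     (((\<Prod>s<Suc m. (fps_X + (fps_X^2)^s)) :: rat fps) * (\<Prod>k\<in>{1..Suc m}. (1 + fps_X*(fps_X^2)^k))) *
     (fps_X * (1 + fps_X^(Suc (2*m)))) * (1 + fps_X^(Suc (2*(m+2))))"
    unfolding a b c d by (simp only: mult_ac)
  also have "\<dots> = fps_X^m * (Op m * Op (m+2)) * (fps_X * (1 + fps_X^(Suc (2*m)))) * (1 + fps_X^(Suc (2*(m+2))))"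
    by (simp only: Suc.IH)
  also have "\<dots> = fps_X^(Suc m) * ((Op m * (1 + fps_X^(Suc (2*m)))) * (Op (m+2) * (1 + fps_X^(Suc (2*(m+2))))))"
    by (simp only: mult_ac power_Suc)
  also have "\<dots> = fps_X^(Suc m) * (Op (Suc m) * Op (Suc (m+2)))"
    by (simp only: Op_Suc)
  finally show ?case by simp
qed

lemma Phi_exp: "n \<ge> 1 \<Longrightarrow> i + 2 * Tz (int i - int n) = (n - 1) + nat ((int i - int n + 1)^2)"
proof -
  assume n: "n \<ge> 1"
  define j where "j = int i - int n"
  have T: "int (Tz j) * 2 = j * (j + 1)" by (rule Tz_int)
  have s: "int (nat ((j + 1)^2)) = (j+1)^2" by simp
  have "int i + 2 * int (Tz j) = (int n - 1) + (j+1)^2"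
    using T unfolding j_def by (simp add: power2_eq_square algebra_simps)
  then have "int (i + 2 * Tz j) = int ((n - 1) + nat ((j + 1)^2))"
    using n s by (simp add: of_nat_diff)
  then have "int (i + 2 * Tz (int i - int n)) = int ((n - 1) + nat ((int i - int n + 1)^2))"
    unfolding j_def .
  then show ?thesis by (simp only: of_nat_eq_iff)
qed

lemma sq_bound: "\<bar>j\<bar> \<le> int (nat ((j+1)^2)) + 1"
proof -
  have "\<bar>j+1\<bar> \<le> (j+1)^2"
  proof (cases "j + 1 = 0")
    case False
    then have "1 \<le> \<bar>j+1\<bar>" by simp
    then have "\<bar>j+1\<bar> * 1 \<le> \<bar>j+1\<bar> * \<bar>j+1\<bar>" by (intro mult_left_mono) simp_all
    then show ?thesis by (simp add: power2_eq_square abs_mult[symmetric])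
  qed simp
  then show ?thesis by simp
qed

theorem Phi_prod0: "fk 2 * (Oinf * Oinf) = Abs_fps (\<lambda>k. of_nat (card {j. nat ((j+1)^2) = k}))"
proof (rule GL[where L = "\<lambda>n. Op (n-1) * Op (n+1)" and K = 1])
  fix n :: nat
  show "eqN n (Oinf * Oinf) (Op (n-1) * Op (n+1))"
  proof (cases n)
    case 0 then show ?thesis by (simp add: eqN_def)
  next
    case (Suc m)
    have "eqN (Suc m) (Oinf * Oinf) (Op m * Op (Suc (Suc m)))"
      using eqN_mult[OF Oinf_eqN[of m] eqN_mono[OF Oinf_eqN[of "Suc (Suc m)"]]] by simp
    then show ?thesis using Suc by simp
  qed
next
  fix n :: nat assume n: "n \<ge> 1"
  then obtain m where m: "n = Suc m" by (cases n) auto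
  have "fps_X^m * (Op (n-1) * Op (n+1)) = (\<Sum>i\<le>n+n. qbin (fps_X^2) (n+n) i * fps_X^i * (fps_X^2)^(Tz (int i - int n)))"
    using CJ[where a=n and b=n and z=fps_X and p="fps_X^2 :: rat fps"] LP[of m] m by simp
  also have "\<dots> = fps_X^m * (\<Sum>i\<le>2*n. qbin (fps_X^2) (2*n) i * fps_X^(nat ((int i - int n + 1)^2)))"
    unfolding sum_distrib_left mult_2
  proof (rule sum.cong)
    fix i
    have "fps_X^i * (fps_X^2)^(Tz (int i - int n)) = (fps_X^(i + 2 * Tz (int i - int n)) :: rat fps)"
      by (simp add: power_mult power_add)
    also have "\<dots> = fps_X^m * fps_X^(nat ((int i - int n + 1)^2))"
    proof -
      have "i + 2 * Tz (int i - int n) = m + nat ((int i - int n + 1)^2)" using Phi_exp[OF n] m by simp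
      then show ?thesis by (simp only: power_add)
    qed
    finally have F: "fps_X^i * (fps_X^2)^(Tz (int i - int n)) = (fps_X^m * fps_X^(nat ((int i - int n + 1)^2)) :: rat fps)" .
    have "qbin (fps_X^2 :: rat fps) (n+n) i * fps_X^i * (fps_X^2)^(Tz (int i - int n)) =
          qbin (fps_X^2 :: rat fps) (n+n) i * (fps_X^i * (fps_X^2)^(Tz (int i - int n)))" by (rule mult.assoc)
    also have "\<dots> = qbin (fps_X^2 :: rat fps) (n+n) i * (fps_X^m * fps_X^(nat ((int i - int n + 1)^2)))" by (simp only: F)
    also have "\<dots> = fps_X^m * (qbin (fps_X^2 :: rat fps) (n+n) i * fps_X^(nat ((int i - int n + 1)^2)))" by (rule mult.left_commute)
    finally show "qbin (fps_X^2 :: rat fps) (n+n) i * fps_X^i * (fps_X^2)^(Tz (int i - int n)) =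
        fps_X^m * (qbin (fps_X^2 :: rat fps) (n+n) i * fps_X^(nat ((int i - int n + 1)^2)))" .
  qed simp
  finally show "Op (n-1) * Op (n+1) = (\<Sum>i\<le>2*n. qbin (fps_X^2) (2*n) i * fps_X^(nat ((int i - int n + 1)^2)))"
    by (simp add: fps_X_power_mult_right_nth mult_left_cancel)
next
  fix j :: int show "\<bar>j\<bar> \<le> int (nat ((j+1)^2)) + int 1" using sq_bound[of j] by simp
qed simp


lemma eqN_allSuc: "(\<And>M. eqN (Suc M) a b) \<Longrightarrow> a = b"
  by (rule eqN_all) (metis eqN_def less_Suc_eq_0_disj less_nat_zero_code not0_implies_Suc)

lemma g_Suc: "g k (Suc M) = g k M * (1 - fps_X^(Suc M * k))"
  unfolding g_def by (simp add: prod.nat_ivl_Suc')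

lemma fk1_Einf: "fk 1 * Einf = fk 2"
proof (rule eqN_allSuc)
  fix M
  have fin: "g 1 M * Ep M = g 2 M"
    unfolding g_def Ep_def prod.distrib[symmetric]
    by (rule prod.cong) (simp_all add: algebra_simps power_mult[symmetric] power2_eq_square power_add[symmetric] mult_2_right)
  have "eqN (Suc M) (fk 1 * Einf) (g 1 M * Ep M)" by (rule eqN_mult[OF fk_eqN Einf_eqN]) simp
  then show "eqN (Suc M) (fk 1 * Einf) (fk 2)" unfolding fin using fk_eqN[of 2 M] eqN_sym eqN_trans by fastforce
qed

lemma dil_g: "0 < d \<Longrightarrow> dil d (g k M) = g (d*k) M"
  unfolding g_def by (simp add: dil_prod dil_diff dil_power dil_X power_mult[symmetric] mult_ac)

lemma dil_fk: "0 < d \<Longrightarrow> 0 < k \<Longrightarrow> dil d (fk k) = fk (d*k)"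
proof (rule eqN_allSuc)
  fix M assume d: "0 < d" and k: "0 < k"
  have "eqN (d * Suc M) (dil d (fk k)) (dil d (g k M))" by (rule eqN_dil[OF d fk_eqN[OF k]])
  moreover have "Suc M \<le> d * Suc M" using d by (cases d) auto
  ultimately have "eqN (Suc M) (dil d (fk k)) (dil d (g k M))" by (rule eqN_mono)
  then have "eqN (Suc M) (dil d (fk k)) (g (d*k) M)" using d by (simp add: dil_g)
  then show "eqN (Suc M) (dil d (fk k)) (fk (d*k))"
    using fk_eqN[of "d*k" M] d k eqN_sym eqN_trans by fastforce
qed

lemma Op_E2: "Op M * dil 2 (Ep M) = Ep (2*M)"
proof (induction M)
  case 0 then show ?case by (simp add: Op_def Ep_def)
next
  case (Suc M)
  have "dil 2 (1 + fps_X^(Suc M)) = 1 + fps_X^(2*Suc M)"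
    by (simp only: dil_add dil_1 dil_power[OF pos2] dil_X[OF pos2] power_mult)
  then have "dil 2 (Ep (Suc M)) = dil 2 (Ep M) * (1 + fps_X^(2*Suc M))"
    by (simp add: Ep_Suc dil_mult)
  moreover have "Ep (2 * Suc M) = Ep (2*M) * (1 + fps_X^(Suc (2*M))) * (1 + fps_X^(2*Suc M))"
    by (simp add: Ep_Suc)
  ultimately show ?case using Suc.IH by (simp add: Op_Suc mult_ac)
qed

lemma Oinf_E: "Oinf * dil 2 Einf = Einf"
proof (rule eqN_allSuc)
  fix M
  have "eqN (2 * Suc M) (dil 2 Einf) (dil 2 (Ep M))" by (rule eqN_dil[OF _ Einf_eqN]) simp
  then have "eqN (Suc M) (dil 2 Einf) (dil 2 (Ep M))" by (rule eqN_mono) simp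
  then have "eqN (Suc M) (Oinf * dil 2 Einf) (Op M * dil 2 (Ep M))" by (rule eqN_mult[OF Oinf_eqN])
  moreover have "eqN (Suc M) (Ep (2*M)) Einf"
    using eqN_mono[OF Einf_eqN[of "2*M"], of "Suc M"] by (simp add: eqN_sym)
  ultimately show "eqN (Suc M) (Oinf * dil 2 Einf) Einf" unfolding Op_E2 using eqN_trans by blast
qed

lemma odd_Suc_2M: "odd (Suc (2*M))" by simp

lemma even_2SucM: "even (2 * Suc M)" by simp

lemma neg_g1: "neg (g 1 (2*M)) = g 2 M * Op M"
proof (induction M)
  case 0 then show ?case by (simp add: g_def Op_def)
next
  case (Suc M)
  have e: "g 1 (2 * Suc M) = g 1 (2*M) * (1 - fps_X^(Suc (2*M))) * (1 - fps_X^(2*Suc M))"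
    by (simp add: g_Suc)
  have n1: "neg (1 - fps_X^(Suc (2*M))) = 1 + fps_X^(Suc (2*M))"
    by (simp only: neg_diff neg_1 neg_power neg_X power_minus_odd[OF odd_Suc_2M]) simp
  have n2: "neg (1 - fps_X^(2*Suc M)) = 1 - fps_X^(Suc M * 2)"
    by (simp only: neg_diff neg_1 neg_power neg_X power_minus_even[OF even_2SucM]) (simp add: mult.commute)
  show ?case unfolding e neg_mult n1 n2 Suc.IH by (simp add: g_Suc Op_Suc mult_ac)
qed

lemma neg_fk1: "neg (fk 1) = fk 2 * Oinf"
proof (rule eqN_allSuc)
  fix M
  have "eqN (Suc (2*M)) (neg (fk 1)) (neg (g 1 (2*M)))" by (rule eqN_neg[OF fk_eqN]) simp
  then have a: "eqN (Suc M) (neg (fk 1)) (g 2 M * Op M)" unfolding neg_g1 by (rule eqN_mono) simp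
  have "eqN (Suc M) (g 2 M * Op M) (fk 2 * Oinf)"
    using eqN_mult[OF fk_eqN[of 2 M] Oinf_eqN[of M]] by (simp add: eqN_sym)
  then show "eqN (Suc M) (neg (fk 1)) (fk 2 * Oinf)" using a eqN_trans by blast
qed


definition PhiS :: "rat fps" where "PhiS = Abs_fps (\<lambda>k. of_nat (card {j::int. nat (j^2) = k}))"
definition Psi2S :: "rat fps" where "Psi2S = Abs_fps (\<lambda>k. of_nat (card {j::int. Tz j = k}))"

lemma Phi_prod: "fk 2 * (Oinf * Oinf) = PhiS"
proof -
  have "card {j::int. nat ((j+1)^2) = k} = card {j::int. nat (j^2) = k}" for k
  proof -
    have eq: "(\<lambda>j. j + 1) ` {j::int. nat ((j+1)^2) = k} = {j::int. nat (j^2) = k}"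
    proof (rule set_eqI, rule iffI)
      fix x assume "x \<in> {j::int. nat (j^2) = k}"
      then have "x - 1 \<in> {j::int. nat ((j+1)^2) = k}" by (simp only: mem_Collect_eq diff_add_cancel)
      then show "x \<in> (\<lambda>j. j + 1) ` {j::int. nat ((j+1)^2) = k}"
        by (rule image_eqI[rotated]) simp
    qed auto
    have "inj_on (\<lambda>j::int. j + 1) {j::int. nat ((j+1)^2) = k}" by (rule inj_onI) simp
    then have "card ((\<lambda>j::int. j + 1) ` {j::int. nat ((j+1)^2) = k}) = card {j::int. nat ((j+1)^2) = k}"
      by (rule card_image)
    then show ?thesis unfolding eq by simp
  qed
  then show ?thesis using Phi_prod0 unfolding PhiS_def by simp
qed

lemma Psi_prod': "fk 1 * (2 * Einf * Einf) = Psi2S"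
  using Psi_prod unfolding Psi2S_def .

lemma abs_le_sq: "\<bar>j::int\<bar> \<le> j^2"
proof (cases "j = 0")
  case False
  then have "1 \<le> \<bar>j\<bar>" by simp
  then have "\<bar>j\<bar> * 1 \<le> \<bar>j\<bar> * \<bar>j\<bar>" by (intro mult_left_mono) simp_all
  then show ?thesis by (simp add: power2_eq_square abs_mult[symmetric])
qed simp

lemma finite_sq: "finite {j::int. nat (j^2) = n}"
proof (rule finite_subset)
  show "{j::int. nat (j^2) = n} \<subseteq> {- int n..int n}"
  proof
    fix j assume "j \<in> {j::int. nat (j^2) = n}"
    then have "j^2 = int n" by auto
    then show "j \<in> {- int n..int n}" using abs_le_sq[of j] by auto
  qed
qed simp

lemma odd_sq: "(2*t+1)^2 = 8 * int (Tz t) + (1::int)"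
  using Tz_int[of t] by (simp add: power2_eq_square algebra_simps)

lemma card_P1: "card {j::int. nat (j^2) = n} =
   (if 4 dvd n then card {i::int. nat (i^2) = n div 4} else 0) +
   (if n \<ge> 1 \<and> 8 dvd (n - 1) then card {t::int. Tz t = (n - 1) div 8} else 0)"
proof -
  define S where "S = {j::int. nat (j^2) = n}"
  have fS: "finite S" unfolding S_def by (rule finite_sq)
  have split: "S = {j\<in>S. even j} \<union> {j\<in>S. odd j}" by auto
  have cS: "card S = card {j\<in>S. even j} + card {j\<in>S. odd j}"
    by (subst split, rule card_Un_disjoint) (use fS in auto)
  have A: "card {j\<in>S. even j} = (if 4 dvd n then card {i::int. nat (i^2) = n div 4} else 0)"
  proof -
    have "{j\<in>S. even j} = (\<lambda>i. 2*i) ` {i::int. 4 * nat (i^2) = n}"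
    proof (rule set_eqI, rule iffI)
      fix j assume "j \<in> {j\<in>S. even j}"
      then obtain i where "j = 2*i" "nat (j^2) = n" unfolding S_def by (auto elim!: evenE)
      then show "j \<in> (\<lambda>i. 2*i) ` {i::int. 4 * nat (i^2) = n}"
        by (auto simp: power_mult_distrib nat_mult_distrib)
    next
      fix j assume "j \<in> (\<lambda>i. 2*i) ` {i::int. 4 * nat (i^2) = n}"
      then show "j \<in> {j\<in>S. even j}" unfolding S_def by (auto simp: power_mult_distrib nat_mult_distrib)
    qed
    moreover have "inj_on (\<lambda>i::int. 2*i) X" for X by (rule inj_onI) simp
    moreover have "{i::int. 4 * nat (i^2) = n} = (if 4 dvd n then {i::int. nat (i^2) = n div 4} else {})"
      by auto
    ultimately show ?thesis by (simp add: card_image)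
  qed
  have B: "card {j\<in>S. odd j} = (if n \<ge> 1 \<and> 8 dvd (n - 1) then card {t::int. Tz t = (n - 1) div 8} else 0)"
  proof -
    have "{j\<in>S. odd j} = (\<lambda>t. 2*t+1) ` {t::int. 8 * Tz t + 1 = n}"
    proof (rule set_eqI, rule iffI)
      fix j assume "j \<in> {j\<in>S. odd j}"
      then obtain t where "j = 2*t+1" "nat (j^2) = n" unfolding S_def by (auto elim!: oddE)
      moreover have "nat ((2*t+1)^2) = 8 * Tz t + 1" using odd_sq[of t] by simp
      ultimately have "t \<in> {t::int. 8 * Tz t + 1 = n}" by simp
      then show "j \<in> (\<lambda>t. 2*t+1) ` {t::int. 8 * Tz t + 1 = n}"
        using \<open>j = 2*t+1\<close> by (rule image_eqI[rotated])
    next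
      fix j assume "j \<in> (\<lambda>t. 2*t+1) ` {t::int. 8 * Tz t + 1 = n}"
      then obtain t where "j = 2*t+1" "8 * Tz t + 1 = n" by auto
      then show "j \<in> {j\<in>S. odd j}" unfolding S_def using odd_sq[of t] by auto
    qed
    moreover have "inj_on (\<lambda>t::int. 2*t+1) X" for X by (rule inj_onI) simp
    moreover have "{t::int. 8 * Tz t + 1 = n} = (if n \<ge> 1 \<and> 8 dvd (n - 1) then {t::int. Tz t = (n - 1) div 8} else {})"
      by auto
    ultimately show ?thesis by (simp add: card_image)
  qed
  show ?thesis using cS A B unfolding S_def by simp
qed

lemma P1: "PhiS = dil 4 PhiS + fps_X * dil 8 Psi2S"
proof (rule fps_ext)
  fix n
  show "PhiS $ n = (dil 4 PhiS + fps_X * dil 8 Psi2S) $ n"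
  proof (cases n)
    case 0
    then show ?thesis by (simp add: PhiS_def dil_nth card_P1)
  next
    case (Suc m)
    then show ?thesis by (simp add: PhiS_def Psi2S_def dil_nth card_P1)
  qed
qed


lemma fk_nz: "0 < k \<Longrightarrow> fk k \<noteq> 0"
  using fk_nth0[of k] by auto

lemma cancelR: "(c::rat fps) \<noteq> 0 \<Longrightarrow> x * c = y * c \<Longrightarrow> x = y"
  by simp

lemma divmul: "(b::rat fps) $ 0 \<noteq> 0 \<Longrightarrow> (a / b) * b = a"
  by (simp add: fps_divide_unit mult.assoc inverse_mult_eq_1)

lemma neg_fk2: "neg (fk 2) = fk 2"
  using neg_dil[of 2 "fk 1"] dil_fk[of 2 1] by simp

lemma bt_rel: "btbar_gf * (fk 1^6 * fk 2^3) = fk 4^3"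
  unfolding btbar_gf_def by (rule divmul) (simp add: fk_nth0)

lemma main_ev: "ev btbar_gf * (fk 1^22 * fk 8^2) = 8 * fps_X * (fk 2^7 * fk 4^3 * fk 8^2) * (fk 1^4 * fk 8^2) + fk 2^17 * fk 4"
proof -
  define f1 where "f1 = fk 1"
  define f2 where "f2 = fk 2"
  define f4 where "f4 = fk 4"
  define f8 where "f8 = fk 8"
  define E where "E = Einf"
  define D where "D = dil 2 E"
  define Ov where "Ov = Oinf"
  define nO where "nO = neg Ov"
  define nE where "nE = neg E"
  define A where "A = dil 2 PhiS"
  define B where "B = dil 4 Psi2S"
  define u where "u = dil 2 A"
  define v where "v = dil 2 B"
  define dO where "dO = dil 2 Ov"
  define Ph where "Ph = PhiS"
  define nPh where "nPh = neg PhiS"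
  have nz: "f1 \<noteq> 0" "f2 \<noteq> 0" "f4 \<noteq> 0" "f8 \<noteq> 0" unfolding f1_def f2_def f4_def f8_def by (simp_all add: fk_nz)
  have d21: "dil 2 f1 = f2" "dil 2 f2 = f4" "dil 2 f4 = f8" "dil 4 f1 = f4" "dil 4 f2 = f8"
    unfolding f1_def f2_def f4_def f8_def by (simp_all add: dil_fk)
  have a: "f1 * E = f2" unfolding f1_def E_def f2_def by (rule fk1_Einf)
  have b: "Ov * D = E" unfolding Ov_def E_def D_def by (rule Oinf_E)
  have dE: "D * f2 = f4"
    using arg_cong[OF a, of "dil 2"] d21 unfolding D_def by (simp add: dil_mult mult.commute)
  have O1: "Ov * f1 * f4 = f2^2"
  proof -
    have "(Ov * f1 * f4) * f2 = (f2^2) * f2"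
      unfolding dE[symmetric] a[symmetric] b[symmetric] by algebra
    then show ?thesis using nz by simp
  qed
  have Phi: "Ph = f2 * Ov^2" using Phi_prod unfolding Ph_def f2_def Ov_def by (simp add: power2_eq_square)
  have Psi: "Psi2S = 2 * f1 * E^2" using Psi_prod' unfolding f1_def E_def by (simp add: power2_eq_square mult_ac)
  have negE: "nO * D = nE"
    using arg_cong[OF b, of neg] unfolding nO_def nE_def D_def by (simp add: neg_mult neg_dil)
  have negA: "neg f1 * nE = f2"
    using arg_cong[OF a, of neg] unfolding nE_def by (simp add: neg_mult f2_def neg_fk2)
  have nf1: "neg f1 = f2 * Ov" unfolding f1_def f2_def Ov_def by (rule neg_fk1)
  have OnE: "Ov * nE = 1"
  proof -
    have "f2 * Ov * nE = f2" using negA unfolding nf1 .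
    then have "(Ov * nE) * f2 = 1 * f2" by (simp add: mult_ac)
    then show ?thesis using nz by simp
  qed
  have K: "Ov * nO * D = 1" using OnE unfolding negE[symmetric] by (simp add: mult_ac)
  have negPhi: "nPh = f2 * nO^2"
    unfolding nPh_def Ph_def[symmetric] Phi nO_def by (simp add: neg_mult neg_power f2_def neg_fk2)
  have PnP: "Ph * nPh * f4^2 = f2^4"
  proof -
    have "Ph * nPh * f4^2 = f2^4 * (Ov * nO * D)^2"
      unfolding Phi negPhi dE[symmetric] by algebra
    then show ?thesis unfolding K by simp
  qed
  have P1': "Ph = u + fps_X * v"
    using P1 unfolding Ph_def u_def v_def A_def B_def by (simp add: dil_dil)
  have negP1: "nPh = u - fps_X * v"
    unfolding nPh_def by (subst P1'[unfolded Ph_def]) (simp add: neg_add neg_mult neg_X neg_dil u_def v_def)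
  have "dil 2 (f2^2 * (A^2 - fps_X * B^2)) = dil 2 (f1^4)"
  proof -
    have "dil 2 (f2^2 * (A^2 - fps_X * B^2)) = f4^2 * (u^2 - fps_X^2 * v^2)"
      using d21 unfolding u_def v_def by (simp add: dil_mult dil_power dil_diff dil_X)
    also have "u^2 - fps_X^2 * v^2 = (u + fps_X * v) * (u - fps_X * v)" by algebra
    also have "\<dots> = Ph * nPh" unfolding negP1 P1' ..
    also have "f4^2 * (Ph * nPh) = f2^4" using PnP by (simp add: mult_ac)
    also have "\<dots> = dil 2 (f1^4)" using d21 by (simp add: dil_power)
    finally show ?thesis .
  qed
  then have D1: "f2^2 * (A^2 - fps_X * B^2) = f1^4" by (rule dil_inj[rotated]) simp
  have nA: "neg A = A" "neg B = B" unfolding A_def B_def by (simp_all add: neg_dil)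
  have "neg (f2^2 * (A^2 - fps_X * B^2)) = neg (f1^4)" using D1 by simp
  then have "f2^2 * (A^2 + fps_X * B^2) = (f2 * Ov)^4"
    by (simp add: neg_mult neg_power neg_diff neg_X nA nf1 f2_def neg_fk2)
  also have "\<dots> = f2^2 * (f2^2 * Ov^4)" by algebra
  finally have "f2^2 * (A^2 + fps_X * B^2) = f2^2 * (f2^2 * Ov^4)" .
  moreover have "f2^2 \<noteq> 0" using nz by simp
  ultimately have D2: "A^2 + fps_X * B^2 = f2^2 * Ov^4" using mult_left_cancel by blast
  have dO: "dO * f2 * f8 = f4^2"
    using arg_cong[OF O1, of "dil 2"] d21 unfolding dO_def by (simp add: dil_mult dil_power)
  have Arel: "A * f2^2 * f8^2 = f4^5"
  proof -
    have Aeq: "A = f4 * dO^2" unfolding A_def Ph_def[symmetric] Phi dO_def using d21 by (simp add: dil_mult dil_power)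
    have "A * f2^2 * f8^2 = f4 * (dO * f2 * f8)^2" unfolding Aeq by algebra
    also have "\<dots> = f4 * (f4^2)^2" unfolding dO ..
    also have "\<dots> = f4^5" by algebra
    finally show ?thesis .
  qed
  have Brel: "B * f4 = 2 * f8^2"
  proof -
    have "Psi2S * f1 = 2 * (f1 * E)^2" unfolding Psi by algebra
    also have "\<dots> = 2 * f2^2" unfolding a ..
    finally have "dil 4 (Psi2S * f1) = dil 4 (2 * f2^2)" by simp
    then show ?thesis unfolding B_def using d21 by (simp add: dil_mult dil_power dil_numeral)
  qed
  have bt: "btbar_gf * (f1^6 * f2^3) = f4^3" unfolding f1_def f2_def f4_def by (rule bt_rel)
  have "(btbar_gf * f2^18) * (f1^6 * f4^6) = (btbar_gf * (f1^6 * f2^3)) * (f2^15 * f4^6)" by algebra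
  also have "\<dots> = f4^3 * (f2^15 * f4^6)" unfolding bt ..
  also have "\<dots> = f2^3 * (f2^2)^6 * f4^9" by algebra
  also have "\<dots> = f2^3 * (Ov * f1 * f4)^6 * f4^9" unfolding O1 ..
  also have "\<dots> = (Ph^3 * f4^9) * (f1^6 * f4^6)" unfolding Phi by algebra
  finally have "(btbar_gf * f2^18) * (f1^6 * f4^6) = (Ph^3 * f4^9) * (f1^6 * f4^6)" .
  then have "btbar_gf * f2^18 = Ph^3 * f4^9" using nz by simp
  then have bt2: "dil 2 (f1^18) * btbar_gf = dil 2 (f2^9) * Ph^3"
    using d21 by (simp add: dil_power mult.commute)
  have cube: "Ph^3 = dil 2 (A^3 + 3 * fps_X * A * B^2) + fps_X * dil 2 (3 * A^2 * B + fps_X * B^3)"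
  proof -
    have "dil 2 (A^3 + 3 * fps_X * A * B^2) + fps_X * dil 2 (3 * A^2 * B + fps_X * B^3) =
       u^3 + 3 * fps_X^2 * u * v^2 + fps_X * (3 * u^2 * v + fps_X^2 * v^3)"
      unfolding u_def v_def by (simp add: dil_mult dil_add dil_power dil_X dil_numeral)
    also have "\<dots> = (u + fps_X * v)^3" by algebra
    finally show ?thesis unfolding P1' by simp
  qed
  have "ev (dil 2 (f1^18) * btbar_gf) = ev (dil 2 (f2^9) * Ph^3)" unfolding bt2 ..
  then have "f1^18 * ev btbar_gf = f2^9 * ev (Ph^3)" by (simp add: ev_dil_mult)
  also have "ev (Ph^3) = A^3 + 3 * fps_X * A * B^2" unfolding cube by (rule ev_split)
  finally have evb: "ev btbar_gf * f1^18 = f2^9 * (A^3 + 3 * fps_X * A * B^2)" by (simp add: mult.commute)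
  define eb where "eb = ev btbar_gf"
  have "(f1^4 * f8^2 * f2^9 * A * (A^2 + fps_X * B^2)) * (f4^4 * f2^2) = (A * f2^2 * f8^2) * f2^11 * (Ov * f1 * f4)^4"
    unfolding D2 by algebra
  also have "\<dots> = f4^5 * f2^11 * (f2^2)^4" unfolding Arel O1 ..
  also have "\<dots> = (f2^17 * f4) * (f4^4 * f2^2)" by algebra
  finally have T1': "f1^4 * f8^2 * f2^9 * A * (A^2 + fps_X * B^2) = f2^17 * f4" using nz by simp
  have "(2 * fps_X * f1^4 * f8^2 * f2^9 * A * B^2) * (f2^2 * f8^2 * f4^2) = 2 * fps_X * f1^4 * f8^2 * f2^9 * (A * f2^2 * f8^2) * (B * f4)^2"
    by algebra
  also have "\<dots> = 2 * fps_X * f1^4 * f8^2 * f2^9 * f4^5 * (2 * f8^2)^2" unfolding Arel Brel ..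
  also have "\<dots> = (8 * fps_X * (f2^7 * f4^3 * f8^2) * (f1^4 * f8^2)) * (f2^2 * f8^2 * f4^2)" by algebra
  finally have T2': "2 * fps_X * f1^4 * f8^2 * f2^9 * A * B^2 = 8 * fps_X * (f2^7 * f4^3 * f8^2) * (f1^4 * f8^2)"
    using nz by simp
  have "eb * (f1^22 * f8^2) = (eb * f1^18) * (f1^4 * f8^2)" by algebra
  also have "\<dots> = f2^9 * (A^3 + 3 * fps_X * A * B^2) * (f1^4 * f8^2)" unfolding eb_def evb ..
  also have "\<dots> = f1^4 * f8^2 * f2^9 * A * (A^2 + fps_X * B^2) + 2 * fps_X * f1^4 * f8^2 * f2^9 * A * B^2"
    by algebra
  also have "\<dots> = 8 * fps_X * (f2^7 * f4^3 * f8^2) * (f1^4 * f8^2) + f2^17 * f4"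
    unfolding T1' T2' by simp
  finally show ?thesis unfolding eb_def f1_def f2_def f4_def f8_def .
qed

theorem mainTheorem5:
  shows "Abs_fps (\<lambda>n. btbar (2 * n)) =
     8 * fps_X * (fk 2 ^ 7 * fk 4 ^ 3 * fk 8 ^ 2) / fk 1 ^ 18
     + (fk 2 ^ 17 * fk 4) / (fk 1 ^ 22 * fk 8 ^ 2)"
proof -
  have L: "Abs_fps (\<lambda>n. btbar (2 * n)) = ev btbar_gf" unfolding btbar_def ev_def ..
  define c where "c = fk 1 ^ 22 * fk 8 ^ 2"
  have cnz: "c \<noteq> 0" unfolding c_def by (simp add: fk_nz)
  have c18: "fk 1 ^ 18 $ 0 \<noteq> 0" by (simp add: fk_nth0)
  have c0: "c $ 0 \<noteq> 0" unfolding c_def by (simp add: fk_nth0)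
  have "(8 * fps_X * (fk 2 ^ 7 * fk 4 ^ 3 * fk 8 ^ 2) / fk 1 ^ 18) * c =
        (8 * fps_X * (fk 2 ^ 7 * fk 4 ^ 3 * fk 8 ^ 2) / fk 1 ^ 18 * fk 1 ^ 18) * (fk 1^4 * fk 8^2)"
    unfolding c_def by (simp add: mult_ac power_add[symmetric])
  also have "\<dots> = 8 * fps_X * (fk 2 ^ 7 * fk 4 ^ 3 * fk 8 ^ 2) * (fk 1^4 * fk 8^2)"
    by (simp only: divmul[OF c18])
  finally have r1: "(8 * fps_X * (fk 2 ^ 7 * fk 4 ^ 3 * fk 8 ^ 2) / fk 1 ^ 18) * c =
     8 * fps_X * (fk 2 ^ 7 * fk 4 ^ 3 * fk 8 ^ 2) * (fk 1^4 * fk 8^2)" .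
  have r2: "((fk 2 ^ 17 * fk 4) / c) * c = fk 2 ^ 17 * fk 4" by (rule divmul[OF c0])
  have "ev btbar_gf * c = (8 * fps_X * (fk 2 ^ 7 * fk 4 ^ 3 * fk 8 ^ 2) / fk 1 ^ 18
     + (fk 2 ^ 17 * fk 4) / c) * c"
    unfolding distrib_right r1 r2 unfolding c_def by (rule main_ev)
  then have "ev btbar_gf = 8 * fps_X * (fk 2 ^ 7 * fk 4 ^ 3 * fk 8 ^ 2) / fk 1 ^ 18 + (fk 2 ^ 17 * fk 4) / c"
    using cnz by simp
  then show ?thesis unfolding L c_def .
qed


end
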